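(* Let $(R,+,\cdot)$ be a finite simple semiring with $|RR|>1$ and $|R|>2$, and let $(M,+)$ be an $R$-semimodule that is faithful of smallest cardinality. Then $(M,+)$ is irreducible.
   Context: A semiring is a nonempty set with a commutative semigroup operation $+$ and a semigroup operation $\cdot$ satisfying both distributive laws; simple if its only congruences are the identity and the full relation. $RR=\{rs: r,s\in R\}$. An $R$-semimodule is a commutative semigroup $(M,+)$ with an action $R\times M\to M$ satisfying $r(sx)=(rs)x$, $(r+s)x=rx+sx$, $r(x+y)=rx+ry$. It is faithful if the map $r\mapsto(x\mapsto rx)$ from $R$ to the endomorphisms of $(M,+)$ is injective; faithful of smallest cardinality if it is faithful and no $R$-semimodule $N$ with $|N|<|M|$ is faithful. A subsemimodule is a subsemigroup closed under the action; a semimodule congruence is an equivalence compatible with $+$ and the action. $M$ is quasitrivial if $rx=sx$ for all $r,s\in R$, $x\in M$; id-quasitrivial if $rx=x$ for all $r,x$. $M$ is sub-irreducible if it is not quasitrivial and all its proper subsemimodules are id-quasitrivial; quotient-irreducible if not quasitrivial and its only congruences are the identity and $M\times M$; irreducible if both. *)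

theory Defs
  imports Main
begin

definition semiring :: "'a set \<Rightarrow> ('a \<Rightarrow> 'a \<Rightarrow> 'a) \<Rightarrow> ('a \<Rightarrow> 'a \<Rightarrow> 'a) \<Rightarrow> bool" where
  "semiring R add mul \<longleftrightarrow> R \<noteq> {} \<and>
     (\<forall>a\<in>R. \<forall>b\<in>R. add a b \<in> R \<and> mul a b \<in> R) \<and>
     (\<forall>a\<in>R. \<forall>b\<in>R. \<forall>c\<in>R. add (add a b) c = add a (add b c)) \<and>
     (\<forall>a\<in>R. \<forall>b\<in>R. add a b = add b a) \<and>
     (\<forall>a\<in>R. \<forall>b\<in>R. \<forall>c\<in>R. mul (mul a b) c = mul a (mul b c)) \<and>
     (\<forall>a\<in>R. \<forall>b\<in>R. \<forall>c\<in>R. mul a (add b c) = add (mul a b) (mul a c)) \<and>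
     (\<forall>a\<in>R. \<forall>b\<in>R. \<forall>c\<in>R. mul (add a b) c = add (mul a c) (mul b c))"

definition semiring_congruence :: "'a set \<Rightarrow> ('a \<Rightarrow> 'a \<Rightarrow> 'a) \<Rightarrow> ('a \<Rightarrow> 'a \<Rightarrow> 'a) \<Rightarrow> 'a rel \<Rightarrow> bool" where
  "semiring_congruence R add mul E \<longleftrightarrow> equiv R E \<and>
     (\<forall>a b c d. (a, b) \<in> E \<longrightarrow> (c, d) \<in> E \<longrightarrow>
        (add a c, add b d) \<in> E \<and> (mul a c, mul b d) \<in> E)"

definition simple_semiring :: "'a set \<Rightarrow> ('a \<Rightarrow> 'a \<Rightarrow> 'a) \<Rightarrow> ('a \<Rightarrow> 'a \<Rightarrow> 'a) \<Rightarrow> bool" where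
  "simple_semiring R add mul \<longleftrightarrow> semiring R add mul \<and>
     (\<forall>E. semiring_congruence R add mul E \<longrightarrow> E = Id_on R \<or> E = R \<times> R)"

definition prods :: "'a set \<Rightarrow> ('a \<Rightarrow> 'a \<Rightarrow> 'a) \<Rightarrow> 'a set" where
  "prods R mul = {mul r s | r s. r \<in> R \<and> s \<in> R}"

definition semimodule ::
  "'a set \<Rightarrow> ('a \<Rightarrow> 'a \<Rightarrow> 'a) \<Rightarrow> ('a \<Rightarrow> 'a \<Rightarrow> 'a) \<Rightarrow> 'm set \<Rightarrow> ('m \<Rightarrow> 'm \<Rightarrow> 'm) \<Rightarrow> ('a \<Rightarrow> 'm \<Rightarrow> 'm) \<Rightarrow> bool" where
  "semimodule R add mul M pl act \<longleftrightarrow> M \<noteq> {} \<and>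
     (\<forall>x\<in>M. \<forall>y\<in>M. pl x y \<in> M) \<and>
     (\<forall>x\<in>M. \<forall>y\<in>M. \<forall>z\<in>M. pl (pl x y) z = pl x (pl y z)) \<and>
     (\<forall>x\<in>M. \<forall>y\<in>M. pl x y = pl y x) \<and>
     (\<forall>r\<in>R. \<forall>x\<in>M. act r x \<in> M) \<and>
     (\<forall>r\<in>R. \<forall>s\<in>R. \<forall>x\<in>M. act r (act s x) = act (mul r s) x) \<and>
     (\<forall>r\<in>R. \<forall>s\<in>R. \<forall>x\<in>M. act (add r s) x = pl (act r x) (act s x)) \<and>
     (\<forall>r\<in>R. \<forall>x\<in>M. \<forall>y\<in>M. act r (pl x y) = pl (act r x) (act r y))"

definition faithful :: "'a set \<Rightarrow> 'm set \<Rightarrow> ('a \<Rightarrow> 'm \<Rightarrow> 'm) \<Rightarrow> bool" where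
  "faithful R M act \<longleftrightarrow> (\<forall>r\<in>R. \<forall>s\<in>R. (\<forall>x\<in>M. act r x = act s x) \<longrightarrow> r = s)"

definition card_less :: "'m set \<Rightarrow> 'n set \<Rightarrow> bool" where
  "card_less N M \<longleftrightarrow> \<not> (\<exists>f. inj_on f M \<and> f ` M \<subseteq> N)"

text \<open>Competitors are taken with carriers in the
  type of M; any semimodule of strictly smaller cardinality than M is isomorphic to one
  of these, so this is no restriction.\<close>
definition faithful_smallest ::
  "'a set \<Rightarrow> ('a \<Rightarrow> 'a \<Rightarrow> 'a) \<Rightarrow> ('a \<Rightarrow> 'a \<Rightarrow> 'a) \<Rightarrow> 'm set \<Rightarrow> ('m \<Rightarrow> 'm \<Rightarrow> 'm) \<Rightarrow> ('a \<Rightarrow> 'm \<Rightarrow> 'm) \<Rightarrow> bool" where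
  "faithful_smallest R add mul M pl act \<longleftrightarrow>
     semimodule R add mul M pl act \<and> faithful R M act \<and>
     (\<forall>(N::'m set) plN actN. semimodule R add mul N plN actN \<and> faithful R N actN
        \<longrightarrow> \<not> card_less N M)"

definition quasitrivial :: "'a set \<Rightarrow> 'm set \<Rightarrow> ('a \<Rightarrow> 'm \<Rightarrow> 'm) \<Rightarrow> bool" where
  "quasitrivial R M act \<longleftrightarrow> (\<forall>r\<in>R. \<forall>s\<in>R. \<forall>x\<in>M. act r x = act s x)"

definition id_quasitrivial :: "'a set \<Rightarrow> 'm set \<Rightarrow> ('a \<Rightarrow> 'm \<Rightarrow> 'm) \<Rightarrow> bool" where
  "id_quasitrivial R M act \<longleftrightarrow> (\<forall>r\<in>R. \<forall>x\<in>M. act r x = x)"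

definition subsemimodule :: "'a set \<Rightarrow> 'm set \<Rightarrow> ('m \<Rightarrow> 'm \<Rightarrow> 'm) \<Rightarrow> ('a \<Rightarrow> 'm \<Rightarrow> 'm) \<Rightarrow> 'm set \<Rightarrow> bool" where
  "subsemimodule R M pl act S \<longleftrightarrow> S \<subseteq> M \<and>
     (\<forall>x\<in>S. \<forall>y\<in>S. pl x y \<in> S) \<and> (\<forall>r\<in>R. \<forall>x\<in>S. act r x \<in> S)"

definition semimodule_congruence :: "'a set \<Rightarrow> 'm set \<Rightarrow> ('m \<Rightarrow> 'm \<Rightarrow> 'm) \<Rightarrow> ('a \<Rightarrow> 'm \<Rightarrow> 'm) \<Rightarrow> 'm rel \<Rightarrow> bool" where
  "semimodule_congruence R M pl act E \<longleftrightarrow> equiv M E \<and>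
     (\<forall>x y u v. (x, y) \<in> E \<longrightarrow> (u, v) \<in> E \<longrightarrow> (pl x u, pl y v) \<in> E) \<and>
     (\<forall>r\<in>R. \<forall>x y. (x, y) \<in> E \<longrightarrow> (act r x, act r y) \<in> E)"

definition sub_irreducible :: "'a set \<Rightarrow> 'm set \<Rightarrow> ('m \<Rightarrow> 'm \<Rightarrow> 'm) \<Rightarrow> ('a \<Rightarrow> 'm \<Rightarrow> 'm) \<Rightarrow> bool" where
  "sub_irreducible R M pl act \<longleftrightarrow> \<not> quasitrivial R M act \<and>
     (\<forall>S. subsemimodule R M pl act S \<and> S \<noteq> M \<longrightarrow> id_quasitrivial R S act)"

definition quotient_irreducible :: "'a set \<Rightarrow> 'm set \<Rightarrow> ('m \<Rightarrow> 'm \<Rightarrow> 'm) \<Rightarrow> ('a \<Rightarrow> 'm \<Rightarrow> 'm) \<Rightarrow> bool" where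
  "quotient_irreducible R M pl act \<longleftrightarrow> \<not> quasitrivial R M act \<and>
     (\<forall>E. semimodule_congruence R M pl act E \<longrightarrow> E = Id_on M \<or> E = M \<times> M)"

definition irreducible_semimodule :: "'a set \<Rightarrow> 'm set \<Rightarrow> ('m \<Rightarrow> 'm \<Rightarrow> 'm) \<Rightarrow> ('a \<Rightarrow> 'm \<Rightarrow> 'm) \<Rightarrow> bool" where
  "irreducible_semimodule R M pl act \<longleftrightarrow>
     sub_irreducible R M pl act \<and> quotient_irreducible R M pl act"

end

theory Submission
  imports Defs
begin


definition ann :: "'a set \<Rightarrow> 'm set \<Rightarrow> ('a \<Rightarrow> 'm \<Rightarrow> 'm) \<Rightarrow> 'm rel \<Rightarrow> 'a rel" where
  "ann R N actN E = {(r,s). r \<in> R \<and> s \<in> R \<and> (\<forall>x\<in>N. (actN r x, actN s x) \<in> E)}"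

lemma ann_cong:
  assumes sr: "semiring R add mul" and sm: "semimodule R add mul N plN actN"
    and E: "semimodule_congruence R N plN actN E"
  shows "semiring_congruence R add mul (ann R N actN E)"
proof -
  have eq: "equiv N E" and Epl: "\<And>x y u v. (x, y) \<in> E \<Longrightarrow> (u, v) \<in> E \<Longrightarrow> (plN x u, plN y v) \<in> E"
    and Eact: "\<And>r x y. r \<in> R \<Longrightarrow> (x, y) \<in> E \<Longrightarrow> (actN r x, actN r y) \<in> E"
    using E unfolding semimodule_congruence_def by blast+
  have Erefl: "\<And>x. x \<in> N \<Longrightarrow> (x,x) \<in> E" using eq unfolding equiv_def refl_on_def by blast
  have Esym: "\<And>x y. (x,y) \<in> E \<Longrightarrow> (y,x) \<in> E" using eq unfolding equiv_def sym_def by blast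
  have Etr: "\<And>x y z. (x,y) \<in> E \<Longrightarrow> (y,z) \<in> E \<Longrightarrow> (x,z) \<in> E" using eq unfolding equiv_def trans_def by blast
  have closed: "\<And>a b. a\<in>R \<Longrightarrow> b\<in>R \<Longrightarrow> add a b \<in> R \<and> mul a b \<in> R" using sr unfolding semiring_def by blast
  have actc: "\<And>r x. r \<in> R \<Longrightarrow> x \<in> N \<Longrightarrow> actN r x \<in> N" using sm unfolding semimodule_def by blast
  have actm: "\<And>r s x. r \<in> R \<Longrightarrow> s \<in> R \<Longrightarrow> x \<in> N \<Longrightarrow> actN r (actN s x) = actN (mul r s) x" using sm unfolding semimodule_def by blast
  have acta: "\<And>r s x. r \<in> R \<Longrightarrow> s \<in> R \<Longrightarrow> x \<in> N \<Longrightarrow> actN (add r s) x = plN (actN r x) (actN s x)" using sm unfolding semimodule_def by blast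
  have "equiv R (ann R N actN E)"
    unfolding equiv_def refl_on_def sym_def trans_def ann_def
    using Erefl Esym Etr actc by blast
  moreover have "(add a c, add b d) \<in> ann R N actN E \<and> (mul a c, mul b d) \<in> ann R N actN E"
    if ab: "(a,b) \<in> ann R N actN E" and cd: "(c,d) \<in> ann R N actN E" for a b c d
  proof -
    have R: "a \<in> R" "b \<in> R" "c \<in> R" "d \<in> R" using ab cd unfolding ann_def by auto
    have h1: "\<And>x. x \<in> N \<Longrightarrow> (actN a x, actN b x) \<in> E" using ab unfolding ann_def by auto
    have h2: "\<And>x. x \<in> N \<Longrightarrow> (actN c x, actN d x) \<in> E" using cd unfolding ann_def by auto
    have "(actN (add a c) x, actN (add b d) x) \<in> E" if x: "x \<in> N" for x
      using acta R x h1 h2 Epl by metis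
    moreover have "(actN (mul a c) x, actN (mul b d) x) \<in> E" if x: "x \<in> N" for x
    proof -
      have "(actN a (actN c x), actN a (actN d x)) \<in> E" using Eact R h2 x by blast
      moreover have "(actN a (actN d x), actN b (actN d x)) \<in> E" using h1 actc R x by blast
      ultimately show ?thesis using Etr actm R x by metis
    qed
    ultimately show ?thesis unfolding ann_def using R closed by auto
  qed
  ultimately show ?thesis unfolding semiring_congruence_def by blast
qed

locale setting =
  fixes R :: "'a set" and add mul :: "'a \<Rightarrow> 'a \<Rightarrow> 'a"
    and M :: "'m set" and pl :: "'m \<Rightarrow> 'm \<Rightarrow> 'm" and act :: "'a \<Rightarrow> 'm \<Rightarrow> 'm"
  assumes simple: "simple_semiring R add mul"
    and finR: "finite R"
    and cprods: "card (prods R mul) > 1"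
    and c2: "card R > 2"
    and fs: "faithful_smallest R add mul M pl act"
begin

lemma sr: "semiring R add mul" using simple unfolding simple_semiring_def by blast
lemma cong_cases: "semiring_congruence R add mul E \<Longrightarrow> E = Id_on R \<or> E = R \<times> R"
  using simple unfolding simple_semiring_def by blast
lemma addc: "a \<in> R \<Longrightarrow> b \<in> R \<Longrightarrow> add a b \<in> R" using sr unfolding semiring_def by blast
lemma mulc: "a \<in> R \<Longrightarrow> b \<in> R \<Longrightarrow> mul a b \<in> R" using sr unfolding semiring_def by blast
lemma add_assoc: "a \<in> R \<Longrightarrow> b \<in> R \<Longrightarrow> c \<in> R \<Longrightarrow> add (add a b) c = add a (add b c)" using sr unfolding semiring_def by blast
lemma add_comm: "a \<in> R \<Longrightarrow> b \<in> R \<Longrightarrow> add a b = add b a" using sr unfolding semiring_def by blast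
lemma mul_assoc: "a \<in> R \<Longrightarrow> b \<in> R \<Longrightarrow> c \<in> R \<Longrightarrow> mul (mul a b) c = mul a (mul b c)" using sr unfolding semiring_def by blast
lemma distl: "a \<in> R \<Longrightarrow> b \<in> R \<Longrightarrow> c \<in> R \<Longrightarrow> mul a (add b c) = add (mul a b) (mul a c)" using sr unfolding semiring_def by blast
lemma distr: "a \<in> R \<Longrightarrow> b \<in> R \<Longrightarrow> c \<in> R \<Longrightarrow> mul (add a b) c = add (mul a c) (mul b c)" using sr unfolding semiring_def by blast

lemma three: obtains a b c where "a \<in> R" "b \<in> R" "c \<in> R" "a \<noteq> b" "a \<noteq> c" "b \<noteq> c"
proof -
  have "Suc (Suc (Suc 0)) \<le> card R" using c2 by simp
  from card_le_Suc_iff[THEN iffD1, OF this] obtain a B where 1: "R = insert a B" "a \<notin> B" "Suc (Suc 0) \<le> card B"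
    by blast
  from card_le_Suc_iff[THEN iffD1, OF 1(3)] obtain b C where 2: "B = insert b C" "b \<notin> C" "Suc 0 \<le> card C"
    by blast
  from card_le_Suc_iff[THEN iffD1, OF 2(3)] obtain c D where 3: "C = insert c D" "c \<notin> D"
    by blast
  show ?thesis by (rule that[of a b c]) (use 1 2 3 in auto)
qed

lemma semilattice:
  assumes idem: "\<forall>x\<in>R. add x x = x"
    and proj: "(\<forall>x\<in>R. \<forall>y\<in>R. mul x y = y) \<or> (\<forall>x\<in>R. \<forall>y\<in>R. mul x y = x)"
  shows False
proof -
  obtain a b c where abc: "a \<in> R" "b \<in> R" "c \<in> R" "a \<noteq> b" "a \<noteq> c" "b \<noteq> c" by (rule three)
  have absorb: "add y (add (add y v) e) = add (add y v) e" if "y \<in> R" "v \<in> R" "e \<in> R" for y v e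
  proof -
    have "add y (add (add y v) e) = add (add y (add y v)) e" using add_assoc[of y "add y v" e] that addc by simp
    also have "add y (add y v) = add (add y y) v" using add_assoc[of y y v] that by simp
    also have "add y y = y" using idem that by simp
    finally show ?thesis .
  qed
  have D: "add (add x u) e = e \<longleftrightarrow> add x e = e \<and> add u e = e" if xue: "x \<in> R" "u \<in> R" "e \<in> R" for x u e
  proof
    assume h: "add (add x u) e = e"
    have "add x e = add x (add (add x u) e)" using h by simp
    also have "\<dots> = e" using absorb[of x u e] xue h by simp
    finally have 1: "add x e = e" .
    have "add u e = add u (add (add u x) e)" using h add_comm[of x u] xue by simp
    also have "\<dots> = add (add u x) e" using absorb[of u x e] xue by simp
    also have "\<dots> = e" using h add_comm[of x u] xue by simp
    finally show "add x e = e \<and> add u e = e" using 1 by simp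
  next
    assume "add x e = e \<and> add u e = e"
    then show "add (add x u) e = e" using xue add_assoc[of x u e] by simp
  qed
  have all: "add x e = e" if e: "e \<in> R" and x: "x \<in> R" for e x
  proof -
    define Q where "Q = {(x,y). x \<in> R \<and> y \<in> R \<and> (add x e = e \<longleftrightarrow> add y e = e)}"
    have "semiring_congruence R add mul Q"
      unfolding semiring_congruence_def
    proof (intro conjI allI impI)
      show "equiv R Q" unfolding Q_def equiv_def refl_on_def sym_def trans_def by auto
    next
      fix p q u v assume pq: "(p,q) \<in> Q" and uv: "(u,v) \<in> Q"
      then have R: "p \<in> R" "q \<in> R" "u \<in> R" "v \<in> R" and i1: "add p e = e \<longleftrightarrow> add q e = e"
        and i2: "add u e = e \<longleftrightarrow> add v e = e" unfolding Q_def by auto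
      have "add (add p u) e = e \<longleftrightarrow> add (add q v) e = e"
        using D[OF R(1) R(3) e] D[OF R(2) R(4) e] i1 i2 by blast
      then show "(add p u, add q v) \<in> Q" unfolding Q_def using R addc by blast
    next
      fix p q u v assume pq: "(p,q) \<in> Q" and uv: "(u,v) \<in> Q"
      then have R: "p \<in> R" "q \<in> R" "u \<in> R" "v \<in> R" unfolding Q_def by auto
      from proj have "(mul p u = u \<and> mul q v = v) \<or> (mul p u = p \<and> mul q v = q)"
        using R by blast
      then show "(mul p u, mul q v) \<in> Q" using pq uv by (elim disjE conjE) simp_all
    qed
    then have "Q = Id_on R \<or> Q = R \<times> R" by (rule cong_cases)
    then show ?thesis
    proof
      assume "Q = Id_on R"
      then have "\<And>p q. p \<in> R \<Longrightarrow> q \<in> R \<Longrightarrow> (add p e = e \<longleftrightarrow> add q e = e) \<Longrightarrow> p = q"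
      proof -
        fix p q assume QI: "Q = Id_on R" and pq: "p \<in> R" "q \<in> R" "(add p e = e \<longleftrightarrow> add q e = e)"
        from pq have "(p,q) \<in> Q" unfolding Q_def by simp
        then show "p = q" using QI by auto
      qed
      then show ?thesis using abc(1-6) e by (cases "add a e = e"; cases "add b e = e"; cases "add c e = e") blast+
    next
      assume "Q = R \<times> R"
      then have "(x, e) \<in> Q" using x e by auto
      then show ?thesis using idem e unfolding Q_def by auto
    qed
  qed
  have "a = add b a" using all[OF abc(1) abc(2)] by simp
  also have "\<dots> = add a b" using add_comm abc by auto
  also have "\<dots> = b" using all[OF abc(2) abc(1)] by simp
  finally show False using abc by simp
qed


lemma Rne: "R \<noteq> {}" using sr unfolding semiring_def by blast

lemma prods_le1: assumes "\<And>x y. x \<in> R \<Longrightarrow> y \<in> R \<Longrightarrow> mul x y = k" shows False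
proof -
  have "prods R mul \<subseteq> {k}" using assms unfolding prods_def by auto
  then have "card (prods R mul) \<le> 1" using card_mono[of "{k}" "prods R mul"] by simp
  then show False using cprods by simp
qed

lemma L_all: "\<not> (\<forall>r\<in>R. \<forall>s\<in>R. \<forall>t\<in>R. mul r t = mul s t)"
proof
  assume H: "\<forall>r\<in>R. \<forall>s\<in>R. \<forall>t\<in>R. mul r t = mul s t"
  obtain r0 where r0: "r0 \<in> R" using Rne by blast
  define K where "K = {(a,b). a \<in> R \<and> b \<in> R \<and> mul r0 a = mul r0 b}"
  have "semiring_congruence R add mul K"
    unfolding semiring_congruence_def
  proof (intro conjI allI impI)
    show "equiv R K" unfolding K_def equiv_def refl_on_def sym_def trans_def by auto
  next
    fix p q u v assume "(p,q) \<in> K" "(u,v) \<in> K"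
    then show "(add p u, add q v) \<in> K" using distl r0 addc unfolding K_def by auto
  next
    fix p q u v assume a: "(p,q) \<in> K" "(u,v) \<in> K"
    then have R: "p \<in> R" "q \<in> R" "u \<in> R" "v \<in> R" unfolding K_def by auto
    have "mul r0 (mul p u) = mul (mul r0 p) u" using mul_assoc R r0 by auto
    also have "\<dots> = mul r0 u" using H R r0 mulc by blast
    also have "\<dots> = mul r0 v" using a unfolding K_def by auto
    also have "\<dots> = mul (mul r0 q) v" using H R r0 mulc by metis
    also have "\<dots> = mul r0 (mul q v)" using mul_assoc R r0 by auto
    finally show "(mul p u, mul q v) \<in> K" using R mulc unfolding K_def by auto
  qed
  then have "K = Id_on R \<or> K = R \<times> R" by (rule cong_cases)
  then show False
  proof
    assume KI: "K = Id_on R"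
    have proj: "mul x y = y" if "x \<in> R" "y \<in> R" for x y
    proof -
      have "mul r0 (mul r0 y) = mul (mul r0 r0) y" using mul_assoc r0 that by auto
      also have "\<dots> = mul r0 y" using H r0 that mulc by blast
      finally have "(mul r0 y, y) \<in> K" using that r0 mulc unfolding K_def by auto
      then have "mul r0 y = y" using KI by auto
      then show ?thesis using H r0 that by metis
    qed
    have "add z z = z" if "z \<in> R" for z
    proof -
      have "z = mul (add z z) z" using proj that addc by metis
      also have "\<dots> = add z z" using distr proj that by metis
      finally show ?thesis by simp
    qed
    then show False using semilattice proj by blast
  next
    assume KA: "K = R \<times> R"
    have "mul x y = mul r0 r0" if "x \<in> R" "y \<in> R" for x y
    proof -
      have "(y, r0) \<in> K" using that r0 KA by auto
      then have "mul r0 y = mul r0 r0" unfolding K_def by auto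
      then show ?thesis using H that r0 by metis
    qed
    then show False by (rule prods_le1)
  qed
qed

lemma R_all: "\<not> (\<forall>r\<in>R. \<forall>s\<in>R. \<forall>t\<in>R. mul t r = mul t s)"
proof
  assume H: "\<forall>r\<in>R. \<forall>s\<in>R. \<forall>t\<in>R. mul t r = mul t s"
  obtain r0 where r0: "r0 \<in> R" using Rne by blast
  define K where "K = {(a,b). a \<in> R \<and> b \<in> R \<and> mul a r0 = mul b r0}"
  have "semiring_congruence R add mul K"
    unfolding semiring_congruence_def
  proof (intro conjI allI impI)
    show "equiv R K" unfolding K_def equiv_def refl_on_def sym_def trans_def by auto
  next
    fix p q u v assume "(p,q) \<in> K" "(u,v) \<in> K"
    then show "(add p u, add q v) \<in> K" using distr r0 addc unfolding K_def by auto
  next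
    fix p q u v assume a: "(p,q) \<in> K" "(u,v) \<in> K"
    then have R: "p \<in> R" "q \<in> R" "u \<in> R" "v \<in> R" unfolding K_def by auto
    have "mul (mul p u) r0 = mul p (mul u r0)" using mul_assoc R r0 by auto
    also have "\<dots> = mul p r0" using H R r0 mulc by blast
    also have "\<dots> = mul q r0" using a unfolding K_def by auto
    also have "\<dots> = mul q (mul v r0)" using H R r0 mulc by metis
    also have "\<dots> = mul (mul q v) r0" using mul_assoc R r0 by auto
    finally show "(mul p u, mul q v) \<in> K" using R mulc unfolding K_def by auto
  qed
  then have "K = Id_on R \<or> K = R \<times> R" by (rule cong_cases)
  then show False
  proof
    assume KI: "K = Id_on R"
    have proj: "mul x y = x" if "x \<in> R" "y \<in> R" for x y
    proof -
      have "mul (mul x r0) r0 = mul x (mul r0 r0)" using mul_assoc r0 that by auto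
      also have "\<dots> = mul x r0" using H r0 that mulc by blast
      finally have "(mul x r0, x) \<in> K" using that r0 mulc unfolding K_def by auto
      then have "mul x r0 = x" using KI by auto
      then show ?thesis using H r0 that by metis
    qed
    have "add z z = z" if "z \<in> R" for z
    proof -
      have "z = mul z (add z z)" using proj that addc by metis
      also have "\<dots> = add z z" using distl proj that by metis
      finally show ?thesis by simp
    qed
    then show False using semilattice proj by blast
  next
    assume KA: "K = R \<times> R"
    have "mul x y = mul r0 r0" if "x \<in> R" "y \<in> R" for x y
    proof -
      have "(x, r0) \<in> K" using that r0 KA by auto
      then have "mul x r0 = mul r0 r0" unfolding K_def by auto
      then show ?thesis using H that r0 by metis
    qed
    then show False by (rule prods_le1)
  qed
qed


lemma sm: "semimodule R add mul M pl act" using fs unfolding faithful_smallest_def by blast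
lemma faith: "faithful R M act" using fs unfolding faithful_smallest_def by blast
lemma faithD: "r \<in> R \<Longrightarrow> s \<in> R \<Longrightarrow> (\<And>x. x \<in> M \<Longrightarrow> act r x = act s x) \<Longrightarrow> r = s"
  using faith unfolding faithful_def by blast
lemma minimal: "semimodule R add mul (N::'m set) plN actN \<Longrightarrow> faithful R N actN \<Longrightarrow> \<exists>f. inj_on f M \<and> f ` M \<subseteq> N"
  using fs unfolding faithful_smallest_def card_less_def by blast
lemma Mne: "M \<noteq> {}" using sm unfolding semimodule_def by blast
lemma plc: "x \<in> M \<Longrightarrow> y \<in> M \<Longrightarrow> pl x y \<in> M" using sm unfolding semimodule_def by blast
lemma pl_assoc: "x \<in> M \<Longrightarrow> y \<in> M \<Longrightarrow> z \<in> M \<Longrightarrow> pl (pl x y) z = pl x (pl y z)" using sm unfolding semimodule_def by blast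
lemma pl_comm: "x \<in> M \<Longrightarrow> y \<in> M \<Longrightarrow> pl x y = pl y x" using sm unfolding semimodule_def by blast
lemma actc: "r \<in> R \<Longrightarrow> x \<in> M \<Longrightarrow> act r x \<in> M" using sm unfolding semimodule_def by blast
lemma actm: "r \<in> R \<Longrightarrow> s \<in> R \<Longrightarrow> x \<in> M \<Longrightarrow> act r (act s x) = act (mul r s) x" using sm unfolding semimodule_def by blast
lemma acta: "r \<in> R \<Longrightarrow> s \<in> R \<Longrightarrow> x \<in> M \<Longrightarrow> act (add r s) x = pl (act r x) (act s x)" using sm unfolding semimodule_def by blast
lemma actp: "r \<in> R \<Longrightarrow> x \<in> M \<Longrightarrow> y \<in> M \<Longrightarrow> act r (pl x y) = pl (act r x) (act r y)" using sm unfolding semimodule_def by blast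

lemma ann_cases: "semimodule R add mul N plN actN \<Longrightarrow> semimodule_congruence R N plN actN E
   \<Longrightarrow> ann R N actN E = Id_on R \<or> ann R N actN E = R \<times> R"
  using ann_cong[OF sr] cong_cases by blast

lemma left_faithful: assumes "r \<in> R" "s \<in> R" "\<And>t. t \<in> R \<Longrightarrow> mul r t = mul s t" shows "r = s"
proof -
  have smR: "semimodule R add mul R add mul" unfolding semimodule_def
    by (intro conjI ballI; metis Rne addc mulc add_assoc add_comm mul_assoc distl distr)
  have cR: "semimodule_congruence R R add mul (Id_on R)"
    unfolding semimodule_congruence_def equiv_def refl_on_def sym_def trans_def by (auto simp: addc mulc)
  have "ann R R mul (Id_on R) \<noteq> R \<times> R"
  proof
    assume "ann R R mul (Id_on R) = R \<times> R"
    then have "\<forall>r\<in>R. \<forall>s\<in>R. \<forall>t\<in>R. mul r t = mul s t" unfolding ann_def by auto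
    then show False using L_all by blast
  qed
  then have "ann R R mul (Id_on R) = Id_on R" using ann_cases[OF smR cR] by blast
  moreover have "(r, s) \<in> ann R R mul (Id_on R)" unfolding ann_def using assms by (auto simp: mulc)
  ultimately show ?thesis by auto
qed

lemma finM: "finite M"
proof (rule ccontr)
  assume inf: "\<not> finite M"
  obtain A where A: "finite A" "card A = card R" "A \<subseteq> M" using infinite_arbitrarily_large[OF inf] by blast
  obtain g where g: "bij_betw g R A" using finite_same_card_bij[OF finR A(1)] A(2) by metis
  define h where "h = inv_into R g"
  have hR: "u \<in> A \<Longrightarrow> h u \<in> R" for u using g unfolding h_def
    by (metis bij_betw_def inv_into_into)
  have gh: "u \<in> A \<Longrightarrow> g (h u) = u" for u using g unfolding h_def
    by (metis bij_betw_def f_inv_into_f)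
  have hg: "a \<in> R \<Longrightarrow> h (g a) = a" for a using g unfolding h_def
    by (metis bij_betw_def inv_into_f_f)
  have gA: "a \<in> R \<Longrightarrow> g a \<in> A" for a using g by (metis bij_betw_def imageI)
  define plN where "plN u v = g (add (h u) (h v))" for u v
  define actN where "actN r u = g (mul r (h u))" for r u
  have Ane: "A \<noteq> {}" using A(2) c2 by auto
  have "semimodule R add mul A plN actN" unfolding semimodule_def plN_def actN_def
    using Ane hR gh hg gA addc mulc add_assoc add_comm mul_assoc distl distr by simp
  moreover have "faithful R A actN" unfolding faithful_def
  proof (intro ballI impI)
    fix r s assume rs: "r \<in> R" "s \<in> R" and H: "\<forall>x\<in>A. actN r x = actN s x"
    show "r = s"
    proof (rule left_faithful[OF rs])
      fix t assume t: "t \<in> R"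
      then have "g (mul r t) = g (mul s t)" using H gA hg unfolding actN_def by metis
      then show "mul r t = mul s t" using g rs t mulc by (metis bij_betw_def inj_on_def)
    qed
  qed
  ultimately obtain f where f: "inj_on f M" "f ` M \<subseteq> A" using minimal by blast
  then have "finite (f ` M)" using A(1) finite_subset by blast
  then have "finite M" using f(1) finite_imageD by blast
  then show False using inf by simp
qed


end


context setting begin
lemma quot_id:
  assumes E: "semimodule_congruence R M pl act E" and annI: "ann R M act E = Id_on R"
  shows "E = Id_on M"
proof -
  have eq: "equiv M E" and Epl: "\<And>x y u v. (x, y) \<in> E \<Longrightarrow> (u, v) \<in> E \<Longrightarrow> (pl x u, pl y v) \<in> E"
    and Eact: "\<And>r x y. r \<in> R \<Longrightarrow> (x, y) \<in> E \<Longrightarrow> (act r x, act r y) \<in> E"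
    using E unfolding semimodule_congruence_def by blast+
  have Erefl: "\<And>x. x \<in> M \<Longrightarrow> (x,x) \<in> E" using eq unfolding equiv_def refl_on_def by blast
  have Esub: "\<And>x y. (x,y) \<in> E \<Longrightarrow> x \<in> M \<and> y \<in> M" using eq unfolding equiv_def refl_on_def by blast
  have Esym: "\<And>x y. (x,y) \<in> E \<Longrightarrow> (y,x) \<in> E" using eq unfolding equiv_def sym_def by blast
  have Etr: "\<And>x y z. (x,y) \<in> E \<Longrightarrow> (y,z) \<in> E \<Longrightarrow> (x,z) \<in> E" using eq unfolding equiv_def trans_def by blast
  define rep where "rep x = (SOME y. (x,y) \<in> E)" for x
  have rep1: "x \<in> M \<Longrightarrow> (x, rep x) \<in> E" for x unfolding rep_def by (rule someI[of _ x]) (rule Erefl)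
  have repM: "x \<in> M \<Longrightarrow> rep x \<in> M" for x using rep1 Esub by blast
  have rep_eq: "(x,y) \<in> E \<Longrightarrow> rep x = rep y" for x y
  proof -
    assume xy: "(x,y) \<in> E"
    have "(\<lambda>z. (x,z) \<in> E) = (\<lambda>z. (y,z) \<in> E)"
    proof (rule ext, rule iffI)
      fix z assume "(x,z) \<in> E" then show "(y,z) \<in> E" using Etr[OF Esym[OF xy]] by blast
    next
      fix z assume "(y,z) \<in> E" then show "(x,z) \<in> E" using Etr[OF xy] by blast
    qed
    then show ?thesis unfolding rep_def by simp
  qed
  have rep_iff: "x \<in> M \<Longrightarrow> y \<in> M \<Longrightarrow> rep x = rep y \<Longrightarrow> (x,y) \<in> E" for x y
  proof -
    assume xy: "x \<in> M" "y \<in> M" "rep x = rep y"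
    have "(x, rep y) \<in> E" using rep1[OF xy(1)] xy(3) by simp
    then show "(x,y) \<in> E" using Etr Esym[OF rep1[OF xy(2)]] by blast
  qed
  have rep_pl1: "rep (pl (rep a) b) = rep (pl a b)" if "a \<in> M" "b \<in> M" for a b
    by (rule rep_eq[OF Epl[OF Esym[OF rep1[OF that(1)]] Erefl[OF that(2)]]])
  have rep_pl2: "rep (pl a (rep b)) = rep (pl a b)" if "a \<in> M" "b \<in> M" for a b
    by (rule rep_eq[OF Epl[OF Erefl[OF that(1)] Esym[OF rep1[OF that(2)]]]])
  have rep_act: "rep (act r (rep a)) = rep (act r a)" if "r \<in> R" "a \<in> M" for r a
    by (rule rep_eq[OF Eact[OF that(1) Esym[OF rep1[OF that(2)]]]])
  define N where "N = rep ` M"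
  define plN where "plN u v = rep (pl u v)" for u v
  define actN where "actN r u = rep (act r u)" for r u
  have NM: "u \<in> N \<Longrightarrow> u \<in> M" for u unfolding N_def using repM by auto
  have "semimodule R add mul N plN actN" unfolding semimodule_def
  proof (intro conjI ballI)
    show "N \<noteq> {}" unfolding N_def using Mne by simp
  next
    fix x y assume xy: "x \<in> N" "y \<in> N"
    have "pl x y \<in> M" by (rule plc[OF NM[OF xy(1)] NM[OF xy(2)]])
    then show "plN x y \<in> N" unfolding plN_def N_def by (rule imageI)
  next
    fix x y z assume "x \<in> N" "y \<in> N" "z \<in> N"
    then have M: "x \<in> M" "y \<in> M" "z \<in> M" using NM by auto
    have "plN (plN x y) z = rep (pl (pl x y) z)" unfolding plN_def by (rule rep_pl1[OF plc[OF M(1,2)] M(3)])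
    also have "\<dots> = rep (pl x (pl y z))" using pl_assoc[OF M] by simp
    also have "\<dots> = plN x (plN y z)" unfolding plN_def by (rule rep_pl2[OF M(1) plc[OF M(2,3)], symmetric])
    finally show "plN (plN x y) z = plN x (plN y z)" .
  next
    fix x y assume "x \<in> N" "y \<in> N"
    then have M: "x \<in> M" "y \<in> M" using NM by auto
    show "plN x y = plN y x" unfolding plN_def using pl_comm[OF M] by simp
  next
    fix r x assume rx: "r \<in> R" "x \<in> N"
    have "act r x \<in> M" by (rule actc[OF rx(1) NM[OF rx(2)]])
    then show "actN r x \<in> N" unfolding actN_def N_def by (rule imageI)
  next
    fix r s x assume rs: "r \<in> R" "s \<in> R" and "x \<in> N"
    then have M: "x \<in> M" using NM by auto
    have "actN r (actN s x) = rep (act r (act s x))" unfolding actN_def by (rule rep_act[OF rs(1) actc[OF rs(2) M]])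
    also have "\<dots> = actN (mul r s) x" unfolding actN_def using actm[OF rs M] by simp
    finally show "actN r (actN s x) = actN (mul r s) x" .
  next
    fix r s x assume rs: "r \<in> R" "s \<in> R" and "x \<in> N"
    then have M: "x \<in> M" using NM by auto
    have "plN (actN r x) (actN s x) = rep (pl (act r x) (rep (act s x)))" unfolding plN_def actN_def
      by (rule rep_pl1[OF actc[OF rs(1) M] repM[OF actc[OF rs(2) M]]])
    also have "\<dots> = rep (pl (act r x) (act s x))" by (rule rep_pl2[OF actc[OF rs(1) M] actc[OF rs(2) M]])
    also have "\<dots> = actN (add r s) x" unfolding actN_def using acta[OF rs M] by simp
    finally show "actN (add r s) x = plN (actN r x) (actN s x)" by simp
  next
    fix r x y assume r: "r \<in> R" and "x \<in> N" "y \<in> N"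
    then have M: "x \<in> M" "y \<in> M" using NM by auto
    have "actN r (plN x y) = rep (act r (pl x y))" unfolding actN_def plN_def by (rule rep_act[OF r plc[OF M]])
    also have "\<dots> = rep (pl (act r x) (act r y))" using actp[OF r M] by simp
    also have "\<dots> = rep (pl (act r x) (rep (act r y)))" by (rule rep_pl2[OF actc[OF r M(1)] actc[OF r M(2)], symmetric])
    also have "\<dots> = plN (actN r x) (actN r y)" unfolding plN_def actN_def
      by (rule rep_pl1[OF actc[OF r M(1)] repM[OF actc[OF r M(2)]], symmetric])
    finally show "actN r (plN x y) = plN (actN r x) (actN r y)" .
  qed
  moreover have "faithful R N actN" unfolding faithful_def
  proof (intro ballI impI)
    fix r s assume rs: "r \<in> R" "s \<in> R" and H: "\<forall>x\<in>N. actN r x = actN s x"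
    have "(act r x, act s x) \<in> E" if x: "x \<in> M" for x
    proof -
      have "rep x \<in> N" unfolding N_def using x by blast
      then have "rep (act r (rep x)) = rep (act s (rep x))" using H unfolding actN_def by blast
      then have "rep (act r x) = rep (act s x)" using rep_act[OF rs(1) x] rep_act[OF rs(2) x] by simp
      then show ?thesis using rep_iff actc rs x by blast
    qed
    then have "(r,s) \<in> ann R M act E" unfolding ann_def using rs by blast
    then show "r = s" using annI by auto
  qed
  ultimately obtain f where f: "inj_on f M" "f ` M \<subseteq> N" using minimal by blast
  have finN: "finite N" unfolding N_def using finM by blast
  have "card M \<le> card N" using card_inj_on_le[OF f finN] .
  moreover have "card N \<le> card M" unfolding N_def using card_image_le[OF finM] .
  ultimately have "card (rep ` M) = card M" unfolding N_def by simp
  then have "inj_on rep M" by (rule eq_card_imp_inj_on[OF finM])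
  then have xy: "(x,y) \<in> E \<Longrightarrow> x = y" for x y using Esub rep_eq inj_onD by metis
  show ?thesis
  proof (rule set_eqI)
    fix p show "p \<in> E \<longleftrightarrow> p \<in> Id_on M"
    proof (cases p)
      case (Pair x y) then show ?thesis using xy[of x y] Esub[of x y] Erefl[of x] by auto
    qed
  qed
qed

lemma kernel: assumes "x \<in> M" "y \<in> M" "\<And>r. r \<in> R \<Longrightarrow> act r x = act r y" shows "x = y"
proof -
  define E where "E = {(x,y). x \<in> M \<and> y \<in> M \<and> (\<forall>r\<in>R. act r x = act r y)}"
  have EC: "semimodule_congruence R M pl act E" unfolding semimodule_congruence_def
  proof (intro conjI allI impI ballI)
    show "equiv M E" unfolding E_def equiv_def refl_on_def sym_def trans_def by auto
  next
    fix x y u v assume "(x, y) \<in> E" "(u, v) \<in> E"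
    then show "(pl x u, pl y v) \<in> E" unfolding E_def using actp plc by auto
  next
    fix r x y assume "r \<in> R" "(x, y) \<in> E"
    then show "(act r x, act r y) \<in> E" unfolding E_def using actm actc mulc by auto
  qed
  have "ann R M act E \<noteq> R \<times> R"
  proof
    assume A: "ann R M act E = R \<times> R"
    have "\<forall>r\<in>R. \<forall>s\<in>R. \<forall>t\<in>R. mul t r = mul t s"
    proof (intro ballI)
      fix r s t assume rst: "r \<in> R" "s \<in> R" "t \<in> R"
      then have "(r,s) \<in> ann R M act E" using A by auto
      then have "\<And>x. x \<in> M \<Longrightarrow> act t (act r x) = act t (act s x)" unfolding ann_def E_def using rst by auto
      then have "\<And>x. x \<in> M \<Longrightarrow> act (mul t r) x = act (mul t s) x" using actm rst by metis
      then show "mul t r = mul t s" using faithD mulc rst by metis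
    qed
    then show False using R_all by blast
  qed
  then have "ann R M act E = Id_on R" using ann_cases[OF sm EC] by blast
  then have "E = Id_on M" by (rule quot_id[OF EC])
  moreover have "(x,y) \<in> E" unfolding E_def using assms by auto
  ultimately show ?thesis by auto
qed

lemma sub_faithful:
  assumes S: "subsemimodule R M pl act S" "S \<noteq> {}" and annI: "ann R S act (Id_on S) = Id_on R"
  shows "S = M"
proof -
  have SM: "S \<subseteq> M" and Spl: "\<And>x y. x \<in> S \<Longrightarrow> y \<in> S \<Longrightarrow> pl x y \<in> S"
    and Sact: "\<And>r x. r \<in> R \<Longrightarrow> x \<in> S \<Longrightarrow> act r x \<in> S"
    using S(1) unfolding subsemimodule_def by blast+
  have "semimodule R add mul S pl act" unfolding semimodule_def
    by (intro conjI ballI; metis S(2) Spl Sact SM subsetD pl_assoc pl_comm actm acta actp)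
  moreover have "faithful R S act" unfolding faithful_def
  proof (intro ballI impI)
    fix r s assume rs: "r \<in> R" "s \<in> R" and H: "\<forall>x\<in>S. act r x = act s x"
    then have "(r,s) \<in> ann R S act (Id_on S)" unfolding ann_def using Sact by auto
    then show "r = s" using annI by auto
  qed
  ultimately obtain f where f: "inj_on f M" "f ` M \<subseteq> S" using minimal by blast
  have "card M \<le> card S" using card_inj_on_le[OF f] finM SM finite_subset by blast
  moreover have "card S \<le> card M" by (rule card_mono[OF finM SM])
  ultimately have "card S = card M" by simp
  then show ?thesis by (rule card_subset_eq[OF finM SM])
qed

end


context setting begin

lemma not_qt: "\<not> quasitrivial R M act"
proof
  assume q: "quasitrivial R M act"
  obtain a b c where abc: "a \<in> R" "b \<in> R" "c \<in> R" "a \<noteq> b" "a \<noteq> c" "b \<noteq> c" by (rule three)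
  have "a = b" by (rule faithD[OF abc(1) abc(2)]) (use q in \<open>auto simp: quasitrivial_def abc\<close>)
  then show False using abc by simp
qed

lemma sub_irr: "sub_irreducible R M pl act"
  unfolding sub_irreducible_def
proof (intro conjI allI impI)
  show "\<not> quasitrivial R M act" by (rule not_qt)
next
  fix S assume SS: "subsemimodule R M pl act S \<and> S \<noteq> M"
  then have S: "subsemimodule R M pl act S" and SnM: "S \<noteq> M" by auto
  have SM: "S \<subseteq> M" and Spl: "\<And>x y. x \<in> S \<Longrightarrow> y \<in> S \<Longrightarrow> pl x y \<in> S"
    and Sact: "\<And>r x. r \<in> R \<Longrightarrow> x \<in> S \<Longrightarrow> act r x \<in> S"
    using S unfolding subsemimodule_def by blast+
  show "id_quasitrivial R S act"
  proof (cases "S = {}")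
    case True then show ?thesis unfolding id_quasitrivial_def by simp
  next
    case False
    have smS: "semimodule R add mul S pl act" unfolding semimodule_def
      by (intro conjI ballI; metis False Spl Sact SM subsetD pl_assoc pl_comm actm acta actp)
    have cS: "semimodule_congruence R S pl act (Id_on S)"
      unfolding semimodule_congruence_def equiv_def refl_on_def sym_def trans_def
      using Spl Sact by auto
    have "ann R S act (Id_on S) \<noteq> Id_on R"
      using sub_faithful[OF S False] SnM by blast
    then have A: "ann R S act (Id_on S) = R \<times> R" using ann_cases[OF smS cS] by blast
    have qt: "act r x = act s x" if "r \<in> R" "s \<in> R" "x \<in> S" for r s x
      using A that unfolding ann_def by auto
    show ?thesis unfolding id_quasitrivial_def
    proof (intro ballI)
      fix r x assume rx: "r \<in> R" "x \<in> S"
      have xM: "x \<in> M" using SM rx by auto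
      show "act r x = x"
      proof (rule kernel[OF actc[OF rx(1) xM] xM])
        fix t assume t: "t \<in> R"
        have "act t (act r x) = act (mul t r) x" by (rule actm[OF t rx(1) xM])
        also have "\<dots> = act t x" by (rule qt[OF mulc[OF t rx(1)] t rx(2)])
        finally show "act t (act r x) = act t x" .
      qed
    qed
  qed
qed

lemma quot_irr: "quotient_irreducible R M pl act"
  unfolding quotient_irreducible_def
proof (intro conjI allI impI)
  show "\<not> quasitrivial R M act" by (rule not_qt)
next
  fix E assume E: "semimodule_congruence R M pl act E"
  have eq: "equiv M E" and Epl: "\<And>x y u v. (x, y) \<in> E \<Longrightarrow> (u, v) \<in> E \<Longrightarrow> (pl x u, pl y v) \<in> E"
    using E unfolding semimodule_congruence_def by blast+
  have Erefl: "\<And>x. x \<in> M \<Longrightarrow> (x,x) \<in> E" using eq unfolding equiv_def refl_on_def by blast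
  have Esub: "\<And>x y. (x,y) \<in> E \<Longrightarrow> x \<in> M \<and> y \<in> M" using eq unfolding equiv_def refl_on_def by blast
  have Esym: "\<And>x y. (x,y) \<in> E \<Longrightarrow> (y,x) \<in> E" using eq unfolding equiv_def sym_def by blast
  have Etr: "\<And>x y z. (x,y) \<in> E \<Longrightarrow> (y,z) \<in> E \<Longrightarrow> (x,z) \<in> E" using eq unfolding equiv_def trans_def by blast
  show "E = Id_on M \<or> E = M \<times> M"
  proof (cases "ann R M act E = Id_on R")
    case True then show ?thesis using quot_id[OF E] by blast
  next
    case False
    then have A: "ann R M act E = R \<times> R" using ann_cases[OF sm E] by blast
    have qt: "(act r x, act s x) \<in> E" if "r \<in> R" "s \<in> R" "x \<in> M" for r s x
      using A that unfolding ann_def by auto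
    define P where "P = {x \<in> M. \<forall>r\<in>R. (x, act r x) \<in> E}"
    have subP: "subsemimodule R M pl act P" unfolding subsemimodule_def
    proof (intro conjI ballI)
      show "P \<subseteq> M" unfolding P_def by auto
    next
      fix x y assume "x \<in> P" "y \<in> P"
      then have xy: "x \<in> M" "y \<in> M" "\<And>r. r \<in> R \<Longrightarrow> (x, act r x) \<in> E" "\<And>r. r \<in> R \<Longrightarrow> (y, act r y) \<in> E"
        unfolding P_def by auto
      have "(pl x y, act r (pl x y)) \<in> E" if r: "r \<in> R" for r
        using Epl[OF xy(3)[OF r] xy(4)[OF r]] actp[OF r xy(1,2)] by simp
      then show "pl x y \<in> P" unfolding P_def using plc xy by auto
    next
      fix r x assume r: "r \<in> R" and "x \<in> P"
      then have x: "x \<in> M" unfolding P_def by auto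
      have "(act r x, act s (act r x)) \<in> E" if s: "s \<in> R" for s
        using qt[OF r mulc[OF s r] x] actm[OF s r x] by simp
      then show "act r x \<in> P" unfolding P_def using actc r x by auto
    qed
    have PM: "P = M"
    proof (rule ccontr)
      assume "P \<noteq> M"
      then have idP: "id_quasitrivial R P act" using sub_irr subP unfolding sub_irreducible_def by blast
      have "\<forall>r\<in>R. \<forall>s\<in>R. \<forall>t\<in>R. mul r t = mul s t"
      proof (intro ballI)
        have key: "mul s t = t" if st: "s \<in> R" "t \<in> R" for s t
        proof (rule faithD[OF mulc[OF st] st(2)])
          fix x assume x: "x \<in> M"
          have "act t x \<in> P" using subP st x unfolding subsemimodule_def P_def
            using qt actc actm mulc by (auto simp: actm)
          then have "act s (act t x) = act t x" using idP st unfolding id_quasitrivial_def by blast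
          then show "act (mul s t) x = act t x" using actm[OF st x] by simp
        qed
        fix r s t assume "r \<in> R" "s \<in> R" "t \<in> R"
        then show "mul r t = mul s t" using key by simp
      qed
      then show False using L_all by blast
    qed
    obtain r0 where r0: "r0 \<in> R" using Rne by blast
    have xP: "(x, act r x) \<in> E" if "x \<in> M" "r \<in> R" for x r using PM that unfolding P_def by auto
    show ?thesis
    proof (cases "\<exists>x\<in>M. {y. (x,y) \<in> E} = M")
      case True
      then obtain x where x: "x \<in> M" "{y. (x,y) \<in> E} = M" by blast
      have "E = M \<times> M"
      proof (rule set_eqI)
        fix p show "p \<in> E \<longleftrightarrow> p \<in> M \<times> M"
        proof (cases p)
          case (Pair y z)
          have "y \<in> M \<Longrightarrow> z \<in> M \<Longrightarrow> (y,z) \<in> E"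
          proof -
            assume "y \<in> M" "z \<in> M"
            then have "(x,y) \<in> E" "(x,z) \<in> E" using x by auto
            then show "(y,z) \<in> E" using Esym Etr by blast
          qed
          then show ?thesis using Pair Esub by auto
        qed
      qed
      then show ?thesis by simp
    next
      case False
      have "quasitrivial R M act" unfolding quasitrivial_def
      proof (intro ballI)
        have idx: "act r x = x" if r: "r \<in> R" and x: "x \<in> M" for r x
        proof -
          define C where "C = {y. (x,y) \<in> E}"
          have CM: "C \<noteq> M" using False x unfolding C_def by blast
          have xx: "(x, pl x x) \<in> E"
          proof -
            have "(pl x x, pl (act r0 x) (act r0 x)) \<in> E" using Epl[OF xP[OF x r0] xP[OF x r0]] .
            moreover have "pl (act r0 x) (act r0 x) = act (add r0 r0) x" using acta[OF r0 r0 x] by simp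
            ultimately have "(pl x x, act (add r0 r0) x) \<in> E" by simp
            moreover have "(x, act (add r0 r0) x) \<in> E" by (rule xP[OF x addc[OF r0 r0]])
            ultimately show ?thesis using Esym Etr by blast
          qed
          have subC: "subsemimodule R M pl act C" unfolding subsemimodule_def
          proof (intro conjI ballI)
            show "C \<subseteq> M" unfolding C_def using Esub by auto
          next
            fix y z assume "y \<in> C" "z \<in> C"
            then have "(x,y) \<in> E" "(x,z) \<in> E" unfolding C_def by auto
            then have "(pl x x, pl y z) \<in> E" by (rule Epl)
            then show "pl y z \<in> C" unfolding C_def using xx Etr by blast
          next
            fix s y assume s: "s \<in> R" and "y \<in> C"
            then have xy: "(x,y) \<in> E" unfolding C_def by auto
            then have "y \<in> M" using Esub by blast
            then have "(y, act s y) \<in> E" using xP s by blast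
            then show "act s y \<in> C" unfolding C_def using xy Etr by blast
          qed
          have "id_quasitrivial R C act" using sub_irr subC CM unfolding sub_irreducible_def by blast
          moreover have "x \<in> C" unfolding C_def using Erefl x by blast
          ultimately show ?thesis using r unfolding id_quasitrivial_def by blast
        qed
        fix r s x assume "r \<in> R" "s \<in> R" "x \<in> M"
        then show "act r x = act s x" using idx by simp
      qed
      then show ?thesis using not_qt by blast
    qed
  qed
qed

end

theorem proposition2p14:
  fixes R :: "'a set" and add mul :: "'a \<Rightarrow> 'a \<Rightarrow> 'a"
    and M :: "'m set" and pl :: "'m \<Rightarrow> 'm \<Rightarrow> 'm" and act :: "'a \<Rightarrow> 'm \<Rightarrow> 'm"
  assumes "simple_semiring R add mul"
    and "finite R"
    and "card (prods R mul) > 1"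
    and "card R > 2"
    and "faithful_smallest R add mul M pl act"
  shows "irreducible_semimodule R M pl act"
proof -
  interpret setting R add mul M pl act using assms by unfold_locales
  show ?thesis unfolding irreducible_semimodule_def using sub_irr quot_irr by blast
qed

end
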